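(* Let $(V,\mathrm{dist})$ be a metric space and $p_1,\dots,p_n\in V$ (not necessarily distinct). For $t\in[n]$ let $Q_t:=\sum_{i=1}^t\sum_{j=1}^t\mathrm{dist}(p_i,p_j)$, and assume $Q_n>0$. For any $t\in[n]$, if $Q_t=0$ then $$\frac1t\ \ge\ \frac{\sum_{i=1}^n\mathrm{dist}(p_t,p_i)}{Q_n}.$$ *)

theory Defs
  imports "HOL-Analysis.Analysis"
begin

end

theory Submission
  imports Defs
begin

theorem lemma3p6:
  fixes p :: "nat \<Rightarrow> 'a::metric_space" and n t :: nat
  assumes "(\<Sum>i=1..n. \<Sum>j=1..n. dist (p i) (p j)) > 0"
    and "t \<in> {1..n}"
    and "(\<Sum>i=1..t. \<Sum>j=1..t. dist (p i) (p j)) = 0"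
  shows "1 / real t \<ge> (\<Sum>i=1..n. dist (p t) (p i)) / (\<Sum>i=1..n. \<Sum>j=1..n. dist (p i) (p j))"
proof -
  define Q where "Q = (\<Sum>i=1..n. \<Sum>j=1..n. dist (p i) (p j))"
  define S where "S = (\<Sum>i=1..n. dist (p t) (p i))"
  have tt: "1 \<le> t" "t \<le> n" using assms(2) by auto
  have "\<forall>i\<in>{1..t}. (\<Sum>j=1..t. dist (p i) (p j)) = 0"
  proof -
    have "finite {1..t}" by simp
    moreover have "\<forall>i\<in>{1..t}. 0 \<le> (\<Sum>j=1..t. dist (p i) (p j))" by (simp add: sum_nonneg)
    ultimately show ?thesis using assms(3) sum_nonneg_eq_0_iff[of "{1..t}" "\<lambda>i. (\<Sum>j=1..t. dist (p i) (p j))"] by simp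
  qed
  hence "\<forall>i\<in>{1..t}. \<forall>j\<in>{1..t}. dist (p i) (p j) = 0"
  proof (intro ballI)
    fix i j assume H: "\<forall>i\<in>{1..t}. (\<Sum>j=1..t. dist (p i) (p j)) = 0" and i: "i \<in> {1..t}" and j: "j \<in> {1..t}"
    have "(\<Sum>j=1..t. dist (p i) (p j)) = 0" using H i by blast
    moreover have "(\<Sum>j=1..t. dist (p i) (p j)) = 0 \<longleftrightarrow> (\<forall>j\<in>{1..t}. dist (p i) (p j) = 0)"
      by (rule sum_nonneg_eq_0_iff) auto
    ultimately show "dist (p i) (p j) = 0" using j by blast
  qed
  hence eq: "\<And>i. i \<in> {1..t} \<Longrightarrow> p i = p t"
  proof -
    fix i assume H: "\<forall>i\<in>{1..t}. \<forall>j\<in>{1..t}. dist (p i) (p j) = 0" and i: "i \<in> {1..t}"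
    have tin: "t \<in> {1..t}" using tt by simp
    have "dist (p i) (p t) = 0" using H i tin by blast
    thus "p i = p t" by (simp only: dist_eq_0_iff)
  qed
  have A: "(\<Sum>i=1..t. \<Sum>j=1..n. dist (p i) (p j)) = real t * S"
  proof -
    have "(\<Sum>i=1..t. \<Sum>j=1..n. dist (p i) (p j)) = (\<Sum>i=1..t. S)"
      unfolding S_def
    proof (rule sum.cong)
      fix i assume "i \<in> {1..t}"
      hence "p i = p t" by (rule eq)
      thus "(\<Sum>j=1..n. dist (p i) (p j)) = (\<Sum>j=1..n. dist (p t) (p j))" by (simp only:)
    qed simp
    thus ?thesis by simp
  qed
  have split: "{1..n} = {1..t} \<union> {t+1..n}" using tt by auto
  have "Q = (\<Sum>i=1..t. \<Sum>j=1..n. dist (p i) (p j)) + (\<Sum>i=t+1..n. \<Sum>j=1..n. dist (p i) (p j))"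
    unfolding Q_def split by (subst sum.union_disjoint) auto
  moreover have "(\<Sum>i=t+1..n. \<Sum>j=1..n. dist (p i) (p j)) \<ge> 0" by (intro sum_nonneg) auto
  ultimately have le: "real t * S \<le> Q" using A by linarith
  have Qp: "Q > 0" using assms(1) Q_def by simp
  have "S / Q \<le> 1 / real t" using le Qp tt by (simp add: divide_simps mult.commute)
  thus ?thesis unfolding S_def Q_def .
qed

end
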